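(* Consider the following RSS-based localization setting. A stationary target is at an unknown position $\mathbf{s}=(x,y,0)\in\mathbb{R}^3$. There are $N$ UAVs; UAV $i$ ($1\le i\le N$) takes $M_i\ge 1$ measurements, the $j$-th one at position $\mathbf{u}_{i,j}=(x_{i,j},y_{i,j},h_{i,j})$. Let $r_{i,j}=\sqrt{(x-x_{i,j})^2+(y-y_{i,j})^2}$ (horizontal distance), $d_{i,j}=\sqrt{r_{i,j}^2+h_{i,j}^2}$, and let $\beta_{i,j}$ be the horizontal UAV–target angle, i.e. $(x_{i,j}-x,\,y_{i,j}-y)=r_{i,j}(\cos\beta_{i,j},\sin\beta_{i,j})$, with $\mathbf{g}_{i,j}=(\cos\beta_{i,j},\sin\beta_{i,j})^T$. The $j$-th measurement of UAV $i$ is $R_{i,j}=p_0-10\gamma\log_{10}(d_{i,j})+\eta_{i,j}$ with known $p_0$, $\gamma>0$ and independent noises $\eta_{i,j}\sim\mathcal{N}(0,\sigma_i^2)$, $\sigma_i>0$. The Fisher information matrix for $(x,y)$ is $$\mathbf{F}=\Big(\frac{10\gamma}{\ln 10}\Big)^2\sum_{i=1}^N\sum_{j=1}^{M_i}\sigma_i^{-2}\frac{r_{i,j}^2}{d_{i,j}^4}\mathbf{g}_{i,j}\mathbf{g}_{i,j}^T.$$ A configuration (choice of all $\mathbf{u}_{i,j}$) is feasible if $r_{i,j}\ge r_0$, $h_{i,j}\ge h_0$ for all $i,j$, and $\|\mathbf{u}_{i,j}-\mathbf{u}_{i,j-1}\|\le t_0c_{\max}$ for $2\le j\le M_i$, where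 $r_0,h_0,t_0>0$ and $c_{\max}\ge 0$ are given. Problem P is to maximize $\det\mathbf{F}$ over feasible configurations. Assume the UAVs hover, i.e. $c_{\max}=0$, so $\mathbf{u}_{i,j}=\mathbf{u}_i$ (and $r_{i,j}=r_i$, $h_{i,j}=h_i$, $d_{i,j}=d_i$, $\mathbf{g}_{i,j}=\mathbf{g}_i$) for all $j$. Let $t$ be an index with $M_t\sigma_t^{-2}=\max\{M_i\sigma_i^{-2}:1\le i\le N\}$, and let $r^*=\max\{r_0,h_0\}$. If $M_t\sigma_t^{-2}\le\frac12\sum_{i=1}^N M_i\sigma_i^{-2}$, then any configuration satisfying $r_i=r^*$ and $h_i=h_0$ for all $i=1,\dots,N$, together with $$\sum_{i=1}^N M_i\sigma_i^{-2}\frac{r_i^2}{d_i^4}\mathbf{g}_i\mathbf{g}_i^T=\frac12\Big(\sum_{i=1}^N M_i\sigma_i^{-2}\frac{r_i^2}{d_i^4}\Big)\mathbf{I},$$ is an optimal solution of problem P.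
   Context: $\mathbf{I}$ is the $2\times 2$ identity matrix. All UAV positions are known to the UAVs; the optimization is over UAV positions for a given target position $\mathbf{s}$. *)

theory Defs
  imports "HOL-Analysis.Analysis"
begin

text \<open>A UAV position is a triple (x, y, h); the target is s = (x, y, 0), represented by (x, y).
  A configuration is u :: nat => nat => position, u i j = position of UAV i at its j-th
  measurement, for 1 <= i <= N and 1 <= j <= M i.\<close>

type_synonym pos3 = "real \<times> real \<times> real"

definition hdist :: "real \<times> real \<Rightarrow> pos3 \<Rightarrow> real" where
  "hdist s p = sqrt ((fst s - fst p)\<^sup>2 + (snd s - fst (snd p))\<^sup>2)"

definition height :: "pos3 \<Rightarrow> real" where
  "height p = snd (snd p)"

definition dist3 :: "real \<times> real \<Rightarrow> pos3 \<Rightarrow> real" where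
  "dist3 s p = sqrt ((hdist s p)\<^sup>2 + (height p)\<^sup>2)"

definition gvec :: "real \<times> real \<Rightarrow> pos3 \<Rightarrow> real^2" where
  "gvec s p = (\<chi> k. if k = 1 then (fst p - fst s) / hdist s p
                    else (fst (snd p) - snd s) / hdist s p)"

definition outer :: "real^2 \<Rightarrow> real^2^2" where
  "outer g = (\<chi> a b. g $ a * g $ b)"

definition fisher ::
  "real \<Rightarrow> (nat \<Rightarrow> real) \<Rightarrow> nat \<Rightarrow> (nat \<Rightarrow> nat) \<Rightarrow> real \<times> real \<Rightarrow> (nat \<Rightarrow> nat \<Rightarrow> pos3) \<Rightarrow> real^2^2"
  where
  "fisher \<gamma> \<sigma> N M s u =
     ((10 * \<gamma> / ln 10)\<^sup>2) *\<^sub>R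
       (\<Sum>i\<in>{1..N}. \<Sum>j\<in>{1..M i}.
          (inverse ((\<sigma> i)\<^sup>2) * (hdist s (u i j))\<^sup>2 / (dist3 s (u i j)) ^ 4) *\<^sub>R outer (gvec s (u i j)))"

definition pdist3 :: "pos3 \<Rightarrow> pos3 \<Rightarrow> real" where
  "pdist3 p q = sqrt ((fst p - fst q)\<^sup>2 + (fst (snd p) - fst (snd q))\<^sup>2 + (snd (snd p) - snd (snd q))\<^sup>2)"

definition feasible ::
  "real \<Rightarrow> real \<Rightarrow> real \<Rightarrow> real \<Rightarrow> nat \<Rightarrow> (nat \<Rightarrow> nat) \<Rightarrow> real \<times> real \<Rightarrow> (nat \<Rightarrow> nat \<Rightarrow> pos3) \<Rightarrow> bool"
  where
  "feasible r0 h0 t0 cmax N M s u \<longleftrightarrow>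
     (\<forall>i\<in>{1..N}. \<forall>j\<in>{1..M i}. hdist s (u i j) \<ge> r0 \<and> height (u i j) \<ge> h0) \<and>
     (\<forall>i\<in>{1..N}. \<forall>j\<in>{2..M i}. pdist3 (u i j) (u i (j - 1)) \<le> t0 * cmax)"

end

theory Submission
  imports Defs
begin


lemma det2_bound:
  fixes A :: "real^2^2"
  assumes "A$1$2 = A$2$1"
  shows "det A \<le> ((A$1$1 + A$2$2)/2)^2"
proof -
  have "((A$1$1 + A$2$2)/2)^2 - det A = ((A$1$1 - A$2$2)/2)^2 + (A$1$2)^2"
    using assms by (simp add: det_2 power2_eq_square field_simps)
  moreover have "((A$1$1 - A$2$2)/2)^2 + (A$1$2)^2 \<ge> 0" by simp
  ultimately show ?thesis by linarith
qed

lemma ratio_bound: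
  fixes r h R h0 :: real
  assumes "h0 > 0" "R \<ge> h0" "r \<ge> R \<or> R = h0" "h \<ge> h0"
  shows "r^2 / (r^2 + h^2)^2 \<le> R^2 / (R^2 + h0^2)^2"
proof -
  have h0sq: "h0^2 \<le> h^2" using assms by (intro power_mono) auto
  have p: "0 < r^2 + h0^2" using assms(1) by (simp add: add_nonneg_pos)
  have "r^2 / (r^2 + h^2)^2 \<le> r^2 / (r^2 + h0^2)^2"
    by (intro divide_left_mono power_mono mult_pos_pos) (use h0sq p in auto)
  also have "\<dots> \<le> R^2 / (R^2 + h0^2)^2"
  proof -
    define x where "x = r^2" define y where "y = R^2" define a where "a = h0^2"
    show ?thesis
    proof (cases "r \<ge> R")
      case False
      hence Rh: "R = h0" using assms by auto
      have a0: "a > 0" using assms by (simp add: a_def)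
      have "a * (x - a)^2 \<ge> 0" using a0 by simp
      hence "x * (a+a)^2 \<le> a * (x+a)^2" by (simp add: power2_eq_square algebra_simps)
      moreover have "x \<ge> 0" by (simp add: x_def)
      ultimately have "x / (x+a)^2 \<le> a / (a+a)^2"
        using a0 by (simp add: divide_simps add_pos_nonneg)
      thus ?thesis by (simp add: x_def a_def Rh)
    next
      case True
    have a0: "a > 0" using assms by (simp add: a_def)
    have ya: "y \<ge> a" unfolding y_def a_def using assms by (intro power_mono) auto
    have xy: "x \<ge> y" unfolding y_def x_def using assms True by (intro power_mono) auto
    have "x*y \<ge> a*a" using ya xy a0 by (intro mult_mono) auto
    hence key: "(x - y) * (x*y - a*a) \<ge> 0" using xy by simp
    have "x * (y+a)^2 \<le> y * (x+a)^2"
      using key by (simp add: power2_eq_square algebra_simps)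
    hence "x / (x+a)^2 \<le> y / (y+a)^2"
      using a0 ya xy by (simp add: divide_simps)
    thus ?thesis by (simp add: x_def y_def a_def)
    qed
  qed
  finally show ?thesis .
qed

lemma dist3_pow4: "(dist3 s p)^4 = ((hdist s p)^2 + (height p)^2)^2"
proof -
  have "(dist3 s p)^2 = (hdist s p)^2 + (height p)^2"
    unfolding dist3_def by (simp add: add_nonneg_nonneg)
  moreover have "(dist3 s p)^4 = ((dist3 s p)^2)^2" by (simp flip: power_mult)
  ultimately show ?thesis by simp
qed

lemma gvec_unit:
  assumes "hdist s p > 0"
  shows "(gvec s p $ 1)^2 + (gvec s p $ 2)^2 = 1"
proof -
  have hd: "(hdist s p)^2 = (fst s - fst p)^2 + (snd s - fst (snd p))^2"
    unfolding hdist_def by (simp add: add_nonneg_nonneg)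
  have "(gvec s p $ 1)^2 + (gvec s p $ 2)^2
      = ((fst p - fst s)^2 + (fst (snd p) - snd s)^2) / (hdist s p)^2"
    by (simp add: gvec_def power_divide add_divide_distrib)
  also have "\<dots> = (hdist s p)^2 / (hdist s p)^2" by (simp add: hd power2_commute)
  also have "\<dots> = 1" using assms by simp
  finally show ?thesis .
qed

lemma fisher_entry:
  "fisher \<gamma> \<sigma> N M s v $ a $ b = (10 * \<gamma> / ln 10)\<^sup>2 *
     (\<Sum>i\<in>{1..N}. \<Sum>j\<in>{1..M i}.
        (inverse ((\<sigma> i)\<^sup>2) * (hdist s (v i j))\<^sup>2 / (dist3 s (v i j)) ^ 4) *
        (gvec s (v i j) $ a * gvec s (v i j) $ b))"
  by (simp add: fisher_def outer_def)

theorem theorem3: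
  fixes N :: nat and M :: "nat \<Rightarrow> nat" and \<sigma> :: "nat \<Rightarrow> real"
    and \<gamma> r0 h0 t0 :: real and s :: "real \<times> real"
    and u :: "nat \<Rightarrow> nat \<Rightarrow> pos3" and w :: "nat \<Rightarrow> pos3" and t :: nat
  assumes N: "N \<ge> 1"
    and M: "\<forall>i\<in>{1..N}. M i \<ge> 1"
    and sigma: "\<forall>i\<in>{1..N}. \<sigma> i > 0"
    and gamma: "\<gamma> > 0"
    and pars: "r0 > 0" "h0 > 0" "t0 > 0"
    and t: "t \<in> {1..N}"
    and tmax: "real (M t) / (\<sigma> t)\<^sup>2 = Max ((\<lambda>i. real (M i) / (\<sigma> i)\<^sup>2) ` {1..N})"
    and cond: "real (M t) / (\<sigma> t)\<^sup>2 \<le> (1/2) * (\<Sum>i\<in>{1..N}. real (M i) / (\<sigma> i)\<^sup>2)"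
    and hover: "\<forall>i\<in>{1..N}. \<forall>j\<in>{1..M i}. u i j = w i"
    and r_opt: "\<forall>i\<in>{1..N}. hdist s (w i) = max r0 h0"
    and h_opt: "\<forall>i\<in>{1..N}. height (w i) = h0"
    and iso: "(\<Sum>i\<in>{1..N}. (real (M i) / (\<sigma> i)\<^sup>2 * (hdist s (w i))\<^sup>2 / (dist3 s (w i)) ^ 4)
                   *\<^sub>R outer (gvec s (w i)))
            = ((1/2) * (\<Sum>i\<in>{1..N}. real (M i) / (\<sigma> i)\<^sup>2 * (hdist s (w i))\<^sup>2 / (dist3 s (w i)) ^ 4))
                   *\<^sub>R mat 1"
  shows "feasible r0 h0 t0 0 N M s u \<and>
         (\<forall>v. feasible r0 h0 t0 0 N M s v \<longrightarrow>
              det (fisher \<gamma> \<sigma> N M s v) \<le> det (fisher \<gamma> \<sigma> N M s u))"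
proof -
  define c where "c = (10 * \<gamma> / ln 10)\<^sup>2"
  define R where "R = max r0 h0"
  define Q where "Q = R^2 / (R^2 + h0^2)^2"
  define q where "q i = real (M i) / (\<sigma> i)\<^sup>2 * (hdist s (w i))\<^sup>2 / (dist3 s (w i)) ^ 4" for i
  define K where "K = (\<Sum>i\<in>{1..N}. q i)"
  have R: "R \<ge> h0" "R \<ge> r0" "R > 0" using pars by (auto simp: R_def)
  have c0: "c \<ge> 0" by (simp add: c_def)
  have feas: "feasible r0 h0 t0 0 N M s u"
    unfolding feasible_def
  proof (intro conjI ballI)
    fix i j assume i: "i \<in> {1..N}" and j: "j \<in> {1..M i}"
    show "r0 \<le> hdist s (u i j)" using hover i j r_opt by auto
    show "h0 \<le> height (u i j)" using hover h_opt i j by auto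
  next
    fix i j assume i: "i \<in> {1..N}" and j: "j \<in> {2..M i}"
    hence "j - 1 \<in> {1..M i}" "j \<in> {1..M i}" by auto
    hence "u i j = w i" "u i (j-1) = w i" using hover i by auto
    thus "pdist3 (u i j) (u i (j - 1)) \<le> t0 * 0" by (simp add: pdist3_def)
  qed
  have Fu: "fisher \<gamma> \<sigma> N M s u = c *\<^sub>R ((K/2) *\<^sub>R mat 1)"
  proof -
    have "fisher \<gamma> \<sigma> N M s u = c *\<^sub>R (\<Sum>i\<in>{1..N}. (real (M i) / (\<sigma> i)\<^sup>2 * (hdist s (w i))\<^sup>2 / (dist3 s (w i)) ^ 4)
                   *\<^sub>R outer (gvec s (w i)))"
      unfolding fisher_def c_def
    proof (intro arg_cong[where f="\<lambda>x. _ *\<^sub>R x"] sum.cong refl)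
      fix i assume i: "i \<in> {1..N}"
      have "(\<Sum>j\<in>{1..M i}. (inverse ((\<sigma> i)\<^sup>2) * (hdist s (u i j))\<^sup>2 / (dist3 s (u i j)) ^ 4) *\<^sub>R outer (gvec s (u i j)))
          = (\<Sum>j\<in>{1..M i}. (inverse ((\<sigma> i)\<^sup>2) * (hdist s (w i))\<^sup>2 / (dist3 s (w i)) ^ 4) *\<^sub>R outer (gvec s (w i)))"
        using hover i by (intro sum.cong) auto
      also have "\<dots> = real (M i) *\<^sub>R ((inverse ((\<sigma> i)\<^sup>2) * (hdist s (w i))\<^sup>2 / (dist3 s (w i)) ^ 4) *\<^sub>R outer (gvec s (w i)))"
        by (subst sum_constant_scaleR) simp
      also have "\<dots> = (real (M i) / (\<sigma> i)\<^sup>2 * (hdist s (w i))\<^sup>2 / (dist3 s (w i)) ^ 4) *\<^sub>R outer (gvec s (w i))"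
        by (simp add: divide_inverse mult.assoc)
      finally show "(\<Sum>j\<in>{1..M i}. (inverse ((\<sigma> i)\<^sup>2) * (hdist s (u i j))\<^sup>2 / (dist3 s (u i j)) ^ 4) *\<^sub>R outer (gvec s (u i j)))
          = (real (M i) / (\<sigma> i)\<^sup>2 * (hdist s (w i))\<^sup>2 / (dist3 s (w i)) ^ 4) *\<^sub>R outer (gvec s (w i))" .
    qed
    also have "\<dots> = c *\<^sub>R ((K/2) *\<^sub>R mat 1)" using iso by (simp add: K_def q_def)
    finally show ?thesis .
  qed
  have detu: "det (fisher \<gamma> \<sigma> N M s u) = (c * K / 2)^2"
    by (simp add: Fu det_2 mat_def power2_eq_square)
  have qb: "q i = real (M i) * (inverse ((\<sigma> i)\<^sup>2) * Q)" if i: "i \<in> {1..N}" for i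
    using r_opt h_opt i by (simp add: q_def dist3_pow4 Q_def R_def field_simps)
  show ?thesis
  proof (intro conjI allI impI feas)
    fix v assume fv: "feasible r0 h0 t0 0 N M s v"
    have vr: "hdist s (v i j) \<ge> r0" "height (v i j) \<ge> h0" if "i \<in> {1..N}" "j \<in> {1..M i}" for i j
      using fv that unfolding feasible_def by auto
    define co where "co i j = inverse ((\<sigma> i)\<^sup>2) * (hdist s (v i j))\<^sup>2 / (dist3 s (v i j)) ^ 4" for i j
    define g where "g i j = gvec s (v i j)" for i j
    let ?F = "fisher \<gamma> \<sigma> N M s v"
    have sym: "?F$1$2 = ?F$2$1" by (simp add: fisher_entry mult.commute)
    have "?F$1$1 + ?F$2$2 = c * (\<Sum>i\<in>{1..N}. \<Sum>j\<in>{1..M i}. co i j * (g i j $ 1 * g i j $ 1))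
          + c * (\<Sum>i\<in>{1..N}. \<Sum>j\<in>{1..M i}. co i j * (g i j $ 2 * g i j $ 2))"
      by (simp add: fisher_entry c_def co_def g_def)
    also have "\<dots> = c * (\<Sum>i\<in>{1..N}. \<Sum>j\<in>{1..M i}. co i j * ((g i j $ 1)^2 + (g i j $ 2)^2))"
      by (simp only: power2_eq_square distrib_left sum.distrib)
    also have "\<dots> = c * (\<Sum>i\<in>{1..N}. \<Sum>j\<in>{1..M i}. co i j)"
    proof (intro arg_cong[where f="\<lambda>x. c * x"] sum.cong refl)
      fix i j assume "i \<in> {1..N}" "j \<in> {1..M i}"
      hence "hdist s (v i j) > 0" using vr pars by force
      thus "co i j * ((g i j $ 1)^2 + (g i j $ 2)^2) = co i j" by (simp add: g_def gvec_unit)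
    qed
    finally have tr: "?F$1$1 + ?F$2$2 = c * (\<Sum>i\<in>{1..N}. \<Sum>j\<in>{1..M i}. co i j)" .
    have cob: "co i j \<le> inverse ((\<sigma> i)\<^sup>2) * Q" if "i \<in> {1..N}" "j \<in> {1..M i}" for i j
    proof -
      have "R \<le> hdist s (v i j) \<or> R = h0" using vr[OF that] by (auto simp: R_def max_def)
      have "(hdist s (v i j))\<^sup>2 / (dist3 s (v i j)) ^ 4 \<le> Q"
        unfolding dist3_pow4 Q_def
        using ratio_bound[of h0 R "hdist s (v i j)" "height (v i j)"] R vr[OF that] pars
          \<open>R \<le> hdist s (v i j) \<or> R = h0\<close> by blast
      hence "inverse ((\<sigma> i)\<^sup>2) * ((hdist s (v i j))\<^sup>2 / dist3 s (v i j) ^ 4) \<le> inverse ((\<sigma> i)\<^sup>2) * Q"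
        by (rule mult_left_mono) simp
      thus ?thesis unfolding co_def by (simp add: times_divide_eq_right)
    qed
    have co0: "co i j \<ge> 0" for i j by (simp add: co_def)
    have S0: "0 \<le> (\<Sum>i\<in>{1..N}. \<Sum>j\<in>{1..M i}. co i j)" by (intro sum_nonneg) (simp add: co0)
    have "(\<Sum>i\<in>{1..N}. \<Sum>j\<in>{1..M i}. co i j) \<le> (\<Sum>i\<in>{1..N}. \<Sum>j\<in>{1..M i}. inverse ((\<sigma> i)\<^sup>2) * Q)"
      by (intro sum_mono) (use cob in auto)
    also have "\<dots> = K" unfolding K_def by (intro sum.cong refl) (simp add: qb)
    finally have SK: "(\<Sum>i\<in>{1..N}. \<Sum>j\<in>{1..M i}. co i j) \<le> K" .
    have "det ?F \<le> ((?F$1$1 + ?F$2$2)/2)^2" by (rule det2_bound[OF sym])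
    also have "\<dots> \<le> (c * K / 2)^2" unfolding tr
      by (intro power_mono divide_right_mono mult_left_mono) (use SK S0 c0 in auto)
    finally show "det ?F \<le> det (fisher \<gamma> \<sigma> N M s u)" by (simp add: detu)
  qed
qed

end
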